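(* Let $X$ be a consonant Wilker space. Then $\Sigma\mathcal O(X)$ is sober.
   Context: $\mathcal O(X)$ is the lattice of open subsets of $X$ ordered by inclusion and $\Sigma\mathcal O(X)$ is this lattice with its Scott topology (a family $\mathcal F$ is Scott open iff it is an upper set and for every directed family $\mathcal D$ of open sets, $\bigcup\mathcal D\in\mathcal F$ implies $\mathcal D\cap\mathcal F\neq\emptyset$). $X$ is a Wilker space if for any open sets $U_1,U_2$ and compact set $K$ with $K\subseteq U_1\cup U_2$ there are compact sets $K_1\subseteq U_1$, $K_2\subseteq U_2$ with $K\subseteq K_1\cup K_2$. A $T_0$ space $X$ is consonant if for every Scott open $\mathcal F\subseteq\mathcal O(X)$ and every $U\in\mathcal F$ there is a compact saturated set $Q$ (saturated = upper set in the specialization order) with $U\in\Phi(Q)\subseteq\mathcal F$, where $\Phi(Q)=\{V\in\mathcal O(X)\mid Q\subseteq V\}$. A $T_0$ space is sober if every irreducible closed set equals $\overline{\{x\}}$ for some point $x$. *)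

theory Defs
  imports "HOL-Analysis.Analysis"
begin

definition opens_of :: "'a topology \<Rightarrow> 'a set set" where
  "opens_of X = {U. openin X U}"

definition directed_opens :: "'a topology \<Rightarrow> 'a set set \<Rightarrow> bool" where
  "directed_opens X D \<longleftrightarrow> D \<noteq> {} \<and> D \<subseteq> opens_of X \<and>
     (\<forall>U\<in>D. \<forall>V\<in>D. \<exists>W\<in>D. U \<subseteq> W \<and> V \<subseteq> W)"

definition scott_open :: "'a topology \<Rightarrow> 'a set set \<Rightarrow> bool" where
  "scott_open X F \<longleftrightarrow> F \<subseteq> opens_of X \<and>
     (\<forall>U\<in>F. \<forall>V. openin X V \<and> U \<subseteq> V \<longrightarrow> V \<in> F) \<and>
     (\<forall>D. directed_opens X D \<and> \<Union>D \<in> F \<longrightarrow> D \<inter> F \<noteq> {})"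

definition scott_opens_space :: "'a topology \<Rightarrow> 'a set topology" where
  "scott_opens_space X = topology (scott_open X)"

lemma istopology_scott_open: "istopology (scott_open X)"
  unfolding istopology_def
proof (intro conjI allI impI)
  fix S T assume S: "scott_open X S" and T: "scott_open X T"
  show "scott_open X (S \<inter> T)"
    unfolding scott_open_def
  proof (intro conjI allI impI ballI)
    show "S \<inter> T \<subseteq> opens_of X" using S by (auto simp: scott_open_def)
  next
    fix U V assume "U \<in> S \<inter> T" "openin X V \<and> U \<subseteq> V"
    then show "V \<in> S \<inter> T" using S T by (auto simp: scott_open_def)
  next
    fix D assume D: "directed_opens X D \<and> \<Union>D \<in> S \<inter> T"
    have "D \<inter> S \<noteq> {}" using D S by (auto simp: scott_open_def)
    then obtain U where U: "U \<in> D" "U \<in> S" by blast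
    have "D \<inter> T \<noteq> {}" using D T by (auto simp: scott_open_def)
    then obtain V where V: "V \<in> D" "V \<in> T" by blast
    obtain W where W: "W \<in> D" "U \<subseteq> W" "V \<subseteq> W"
      using D U(1) V(1) unfolding directed_opens_def by blast
    have "openin X W" using W D by (auto simp: directed_opens_def opens_of_def)
    then have "W \<in> S" "W \<in> T" using S T U V W by (auto simp: scott_open_def)
    then show "D \<inter> (S \<inter> T) \<noteq> {}" using W by auto
  qed
next
  fix K assume K: "\<forall>S\<in>K. scott_open X S"
  show "scott_open X (\<Union>K)"
    unfolding scott_open_def
  proof (intro conjI allI impI ballI)
    show "\<Union>K \<subseteq> opens_of X" using K by (auto simp: scott_open_def)
  next
    fix U V assume "U \<in> \<Union>K" "openin X V \<and> U \<subseteq> V"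
    then show "V \<in> \<Union>K" using K by (auto simp: scott_open_def)
  next
    fix D assume D: "directed_opens X D \<and> \<Union>D \<in> \<Union>K"
    then obtain S where "S \<in> K" "\<Union>D \<in> S" by auto
    then have "D \<inter> S \<noteq> {}" using K D by (auto simp: scott_open_def)
    then show "D \<inter> \<Union>K \<noteq> {}" using \<open>S \<in> K\<close> by auto
  qed
qed

lemma openin_scott_opens_space:
  "openin (scott_opens_space X) F \<longleftrightarrow> scott_open X F"
  by (simp add: scott_opens_space_def istopology_scott_open)

definition specializes :: "'a topology \<Rightarrow> 'a \<Rightarrow> 'a \<Rightarrow> bool" where
  "specializes X x y \<longleftrightarrow> x \<in> topspace X \<and> y \<in> topspace X \<and>
     (\<forall>U. openin X U \<and> x \<in> U \<longrightarrow> y \<in> U)"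

definition saturated_in :: "'a topology \<Rightarrow> 'a set \<Rightarrow> bool" where
  "saturated_in X Q \<longleftrightarrow> Q \<subseteq> topspace X \<and> (\<forall>x\<in>Q. \<forall>y. specializes X x y \<longrightarrow> y \<in> Q)"

definition Phi :: "'a topology \<Rightarrow> 'a set \<Rightarrow> 'a set set" where
  "Phi X Q = {V. openin X V \<and> Q \<subseteq> V}"

definition wilker_space :: "'a topology \<Rightarrow> bool" where
  "wilker_space X \<longleftrightarrow> (\<forall>U1 U2 K. openin X U1 \<and> openin X U2 \<and> compactin X K \<and> K \<subseteq> U1 \<union> U2 \<longrightarrow>
     (\<exists>K1 K2. compactin X K1 \<and> compactin X K2 \<and> K1 \<subseteq> U1 \<and> K2 \<subseteq> U2 \<and> K \<subseteq> K1 \<union> K2))"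

definition consonant_space :: "'a topology \<Rightarrow> bool" where
  "consonant_space X \<longleftrightarrow> t0_space X \<and>
     (\<forall>F U. scott_open X F \<and> U \<in> F \<longrightarrow>
        (\<exists>Q. compactin X Q \<and> saturated_in X Q \<and> U \<in> Phi X Q \<and> Phi X Q \<subseteq> F))"

definition irreducible_closed :: "'b topology \<Rightarrow> 'b set \<Rightarrow> bool" where
  "irreducible_closed Y C \<longleftrightarrow> closedin Y C \<and> C \<noteq> {} \<and>
     (\<forall>A B. closedin Y A \<and> closedin Y B \<and> C \<subseteq> A \<union> B \<longrightarrow> C \<subseteq> A \<or> C \<subseteq> B)"

definition sober_space :: "'b topology \<Rightarrow> bool" where
  "sober_space Y \<longleftrightarrow> t0_space Y \<and>
     (\<forall>C. irreducible_closed Y C \<longrightarrow> (\<exists>x\<in>topspace Y. C = Y closure_of {x}))"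

end

theory Submission
  imports Defs
begin

lemma directed_finite_bound:
  assumes "finite F" "F \<subseteq> D" and dir: "directed_opens X D"
  shows "\<exists>W\<in>D. \<Union>F \<subseteq> W"
  using assms(1,2)
proof (induction F rule: finite_induct)
  case empty
  then show ?case using dir by (auto simp: directed_opens_def)
next
  case (insert x F)
  then have "F \<subseteq> D" by simp
  from insert.IH[OF this] obtain W where W: "W \<in> D" "\<Union>F \<subseteq> W" by (elim bexE)
  have x: "x \<in> D" using insert.prems by simp
  have "\<forall>U\<in>D. \<forall>V\<in>D. \<exists>W\<in>D. U \<subseteq> W \<and> V \<subseteq> W"
    using dir unfolding directed_opens_def by simp
  then obtain W' where W': "W' \<in> D" "x \<subseteq> W'" "W \<subseteq> W'"
    using x W(1) by meson
  show ?case
  proof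
    show "W' \<in> D" by (rule W'(1))
    show "\<Union>(insert x F) \<subseteq> W'" using W(2) W'(2,3) by auto
  qed
qed

lemma scott_open_Phi:
  assumes "compactin X K"
  shows "scott_open X (Phi X K)"
  unfolding scott_open_def
proof (intro conjI allI impI ballI)
  show "Phi X K \<subseteq> opens_of X" by (auto simp: Phi_def opens_of_def)
next
  fix U V assume "U \<in> Phi X K" "openin X V \<and> U \<subseteq> V"
  then show "V \<in> Phi X K" by (auto simp: Phi_def)
next
  fix D assume D: "directed_opens X D \<and> \<Union>D \<in> Phi X K"
  then have "\<forall>U\<in>D. openin X U" "K \<subseteq> \<Union>D"
    by (auto simp: directed_opens_def opens_of_def Phi_def)
  then obtain F where F: "finite F" "F \<subseteq> D" "K \<subseteq> \<Union>F"
    using assms unfolding compactin_def by meson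
  moreover have "directed_opens X D" using D by simp
  ultimately obtain W where "W \<in> D" "\<Union>F \<subseteq> W" using directed_finite_bound[of F D X] by meson
  then have "W \<in> Phi X K" using F D by (auto simp: Phi_def directed_opens_def opens_of_def)
  then show "D \<inter> Phi X K \<noteq> {}" using \<open>W \<in> D\<close> by auto
qed

lemma scott_open_not_below:
  assumes "openin X V"
  shows "scott_open X {W. openin X W \<and> \<not> W \<subseteq> V}"
  unfolding scott_open_def
proof (intro conjI allI impI ballI)
  fix D assume D: "directed_opens X D \<and> \<Union>D \<in> {W. openin X W \<and> \<not> W \<subseteq> V}"
  then obtain W where "W \<in> D" "\<not> W \<subseteq> V" by auto
  then show "D \<inter> {W. openin X W \<and> \<not> W \<subseteq> V} \<noteq> {}"
    using D by (auto simp: directed_opens_def opens_of_def)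
qed (auto simp: opens_of_def)

lemma topspace_scott: "topspace (scott_opens_space X) = opens_of X"
proof
  show "topspace (scott_opens_space X) \<subseteq> opens_of X"
    by (metis openin_scott_opens_space openin_topspace scott_open_def)
  have "scott_open X (opens_of X)"
    unfolding scott_open_def by (auto simp: opens_of_def directed_opens_def)
  then show "opens_of X \<subseteq> topspace (scott_opens_space X)"
    by (metis openin_scott_opens_space openin_subset)
qed

theorem theorem4p18:
  fixes X :: "'a topology"
  assumes "consonant_space X" and "wilker_space X"
  shows "sober_space (scott_opens_space X)"
  unfolding sober_space_def
proof (intro conjI allI impI)
  let ?S = "scott_opens_space X"
  show "t0_space ?S"
    unfolding t0_space_def topspace_scott
  proof (intro ballI impI)
    fix U V assume UV: "U \<in> opens_of X" "V \<in> opens_of X" "U \<noteq> V"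
    show "\<exists>T. openin ?S T \<and> (U \<notin> T) = (V \<in> T)"
    proof (cases "U \<subseteq> V")
      case True
      then have nVU: "\<not> V \<subseteq> U" using UV by auto
      let ?T = "{W. openin X W \<and> \<not> W \<subseteq> U}"
      have "openin ?S ?T" using scott_open_not_below[of X U] UV(1)
        by (simp add: openin_scott_opens_space opens_of_def)
      moreover have "U \<notin> ?T" by simp
      moreover have "V \<in> ?T" using nVU UV(2) by (simp add: opens_of_def)
      ultimately show ?thesis by blast
    next
      case False
      let ?T = "{W. openin X W \<and> \<not> W \<subseteq> V}"
      have "openin ?S ?T" using scott_open_not_below[of X V] UV(2)
        by (simp add: openin_scott_opens_space opens_of_def)
      moreover have "U \<in> ?T" using False UV(1) by (simp add: opens_of_def)
      moreover have "V \<notin> ?T" by simp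
      ultimately show ?thesis by blast
    qed
  qed
next
  let ?S = "scott_opens_space X"
  fix C assume irr: "irreducible_closed ?S C"
  have Ccl: "closedin ?S C" and Cne: "C \<noteq> {}" using irr by (auto simp: irreducible_closed_def)
  have Csub: "C \<subseteq> opens_of X" using closedin_subset[OF Ccl] topspace_scott by metis
  have Fo: "scott_open X (opens_of X - C)"
    using Ccl by (simp add: closedin_def topspace_scott openin_scott_opens_space)
  have union: "U \<union> V \<in> C" if "U \<in> C" "V \<in> C" for U V
  proof (rule ccontr)
    assume "U \<union> V \<notin> C"
    moreover have "openin X (U \<union> V)" using that Csub by (auto simp: opens_of_def)
    ultimately have "U \<union> V \<in> opens_of X - C" by (auto simp: opens_of_def)
    have cons: "\<forall>F U. scott_open X F \<and> U \<in> F \<longrightarrow>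
        (\<exists>Q. compactin X Q \<and> saturated_in X Q \<and> U \<in> Phi X Q \<and> Phi X Q \<subseteq> F)"
      using assms(1) unfolding consonant_space_def by (elim conjE)
    from cons[rule_format, OF conjI[OF Fo \<open>U \<union> V \<in> opens_of X - C\<close>]]
    obtain Q where Q: "compactin X Q" "U \<union> V \<in> Phi X Q" "Phi X Q \<subseteq> opens_of X - C"
      by (elim exE conjE) simp
    have oU: "openin X U" and oV: "openin X V" using that Csub by (auto simp: opens_of_def)
    have QUV: "Q \<subseteq> U \<union> V" using Q(2) by (simp add: Phi_def)
    from assms(2)[unfolded wilker_space_def, rule_format, OF conjI[OF oU conjI[OF oV conjI[OF Q(1) QUV]]]]
    obtain K1 K2 where K: "compactin X K1" "compactin X K2" "K1 \<subseteq> U" "K2 \<subseteq> V" "Q \<subseteq> K1 \<union> K2"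
      by (elim exE conjE) simp
    let ?A = "opens_of X - Phi X K1" and ?B = "opens_of X - Phi X K2"
    have eA: "opens_of X - ?A = Phi X K1" and eB: "opens_of X - ?B = Phi X K2"
      by (auto simp: Phi_def opens_of_def)
    have cA: "closedin ?S ?A" unfolding closedin_def topspace_scott eA
      by (simp add: openin_scott_opens_space scott_open_Phi K(1))
    have cB: "closedin ?S ?B" unfolding closedin_def topspace_scott eB
      by (simp add: openin_scott_opens_space scott_open_Phi K(2))
    have "C \<subseteq> ?A \<union> ?B"
    proof
      fix W assume "W \<in> C"
      show "W \<in> ?A \<union> ?B"
      proof (rule ccontr)
        assume "W \<notin> ?A \<union> ?B"
        then have "W \<in> Phi X Q" using \<open>W \<in> C\<close> Csub K(5) by (auto simp: Phi_def)
        then show False using Q(3) \<open>W \<in> C\<close> by auto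
      qed
    qed
    then have "C \<subseteq> ?A \<or> C \<subseteq> ?B" using irr cA cB unfolding irreducible_closed_def by blast
    moreover have "U \<in> Phi X K1" "V \<in> Phi X K2" using oU oV K by (auto simp: Phi_def)
    ultimately show False using that by auto
  qed
  have dir: "directed_opens X C"
    unfolding directed_opens_def using Cne Csub union by blast
  define U0 where "U0 = \<Union>C"
  have oU0: "U0 \<in> opens_of X" using Csub by (auto simp: U0_def opens_of_def)
  have "U0 \<in> C"
  proof (rule ccontr)
    assume "U0 \<notin> C"
    then have "\<Union>C \<in> opens_of X - C" using oU0 U0_def by auto
    then have "C \<inter> (opens_of X - C) \<noteq> {}" using Fo dir unfolding scott_open_def by blast
    then show False by auto
  qed
  have "C = ?S closure_of {U0}"
  proof
    show "?S closure_of {U0} \<subseteq> C"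
      using closure_of_minimal[OF _ Ccl] \<open>U0 \<in> C\<close> by auto
    show "C \<subseteq> ?S closure_of {U0}"
    proof
      fix W assume W: "W \<in> C"
      show "W \<in> ?S closure_of {U0}"
        unfolding in_closure_of
      proof (intro conjI allI impI)
        show "W \<in> topspace ?S" using W Csub topspace_scott by auto
        fix T assume "W \<in> T \<and> openin ?S T"
        then have "scott_open X T" "W \<in> T" by (auto simp: openin_scott_opens_space)
        moreover have "W \<subseteq> U0" "openin X U0" using W oU0 by (auto simp: U0_def opens_of_def)
        ultimately have "U0 \<in> T" unfolding scott_open_def by blast
        then show "\<exists>y. y \<in> {U0} \<and> y \<in> T" by auto
      qed
    qed
  qed
  then show "\<exists>x\<in>topspace ?S. C = ?S closure_of {x}"
    using oU0 topspace_scott by auto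
qed

end
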